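(* Let $L$ be an oriented, ordered virtual link diagram with affine bilabeling $C$. Let $L_i$ be a component of weight $n$ whose starting point $s$ carries bilabel $(a_1,a_2)$. Let $c$ be the first classical crossing met by $L_i$ after $s$, and suppose $c$ is a self-crossing of $L_i$. Let $\iota\in\{\pm1\}$ be the index change of this passage of $L_i$ through $c$. Let $C'$ be obtained by moving the starting point of $L_i$ forward to a point $s'$ just past this passage through $c$, with the same starting bilabel, and keeping everything else the same. Then: - the weight of $c$ changes by $+n$ if the passage is the overstrand of $c$, and by $-n$ if it is the understrand; and - all other labels of $L_i$ (those not on the segment between $s$ and $s'$) shift by $-\iota$, the opposite of the index change.
   Context: **Diagrams.** A virtual link diagram is an oriented planar diagram of ordered closed curves $L_1,\dots,L_n$ (components) with classical and virtual crossings. **Crossing conventions.** Draw a classical crossing with both strands oriented upward. - The bottom-left-to-top-right strand has index change $-1$; the bottom-right-to-top-left strand has index change $+1$. - The crossing is positive if the overstrand is the bottom-left-to-top-right strand, and negative otherwise. - Self-crossings have both strands on one component; external crossings have strands on different components. - The weight of a component $L_i$ is the sum of the index changes of $L_i$ over its passages through external classical crossings. **Affine bilabeling.** - Each component gets a starting point with bilabel $(a^{(i)}_1,a^{(i)}_2)$ of formal integer variables. - The bilabel is carried along the component in its orientation and is unchanged at virtual crossings. - At a classical crossing with index change $\varepsilon$, the first entry changes by $\varepsilon$ at a self-crossing, and the second entry changes by $\varepsilon$ at an external crossing. - On returning to the starting point, the label is off by the component's weight in the second entry; this discrepancy is placed at the starting point. **Crossing weight.** For $|(x,y)|=x+y$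 and $c$ drawn with both strands upward: - if $c$ is positive, $W(c)=|\text{bottom-left}|-|\text{top-left}|$; - if $c$ is negative, $W(c)=|\text{bottom-right}|-|\text{top-right}|$. *)

theory Defs
  imports Main
begin

text \<open>Components are numbered 0,...,k-1.  Virtual crossings do not affect labels,
  so a component is recorded as the list of its passages through classical
  crossings, in the order met when travelling from its starting point along
  the orientation.  A passage is (c, over, e): the classical crossing c,
  whether this passage is the overstrand of c, and its index change e
  (-1 for the bottom-left-to-top-right strand, +1 for the other one).
  Arc j of component i (0 <= j <= length) is the piece after the j-th passage
  and before the (j+1)-th; arc 0 starts at the starting point and arc
  (length) ends at the starting point.\<close>

type_synonym 'c passage = "'c \<times> bool \<times> int"
type_synonym 'c diagram = "nat \<Rightarrow> 'c passage list"

definition pcross :: "'c passage \<Rightarrow> 'c" where "pcross q = fst q"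
definition pover :: "'c passage \<Rightarrow> bool" where "pover q = fst (snd q)"
definition ichange :: "'c passage \<Rightarrow> int" where "ichange q = snd (snd q)"

definition wf_diagram :: "nat \<Rightarrow> 'c diagram \<Rightarrow> bool" where
  "wf_diagram k P \<longleftrightarrow>
    (\<forall>i<k. \<forall>j<length (P i). case P i ! j of (c, b, e) \<Rightarrow>
       (e = 1 \<or> e = -1) \<and>
       (\<exists>!ij. fst ij < k \<and> snd ij < length (P (fst ij)) \<and>
              pcross (P (fst ij) ! snd ij) = c \<and> pover (P (fst ij) ! snd ij) = b) \<and>
       (\<exists>i'<k. \<exists>j'<length (P i'). P i' ! j' = (c, \<not> b, - e)))"

definition loc :: "nat \<Rightarrow> 'c diagram \<Rightarrow> 'c \<Rightarrow> bool \<Rightarrow> nat \<times> nat" where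
  "loc k P c b = (THE ij. fst ij < k \<and> snd ij < length (P (fst ij)) \<and>
      pcross (P (fst ij) ! snd ij) = c \<and> pover (P (fst ij) ! snd ij) = b)"

definition strand_loc :: "nat \<Rightarrow> 'c diagram \<Rightarrow> 'c \<Rightarrow> int \<Rightarrow> nat \<times> nat" where
  "strand_loc k P c e = (THE ij. fst ij < k \<and> snd ij < length (P (fst ij)) \<and>
      pcross (P (fst ij) ! snd ij) = c \<and> ichange (P (fst ij) ! snd ij) = e)"

definition is_self :: "nat \<Rightarrow> 'c diagram \<Rightarrow> 'c \<Rightarrow> bool" where
  "is_self k P c \<longleftrightarrow> fst (loc k P c True) = fst (loc k P c False)"

text \<open>Positive crossing: the overstrand is the bottom-left-to-top-right strand
  (index change -1).\<close>
definition positive :: "nat \<Rightarrow> 'c diagram \<Rightarrow> 'c \<Rightarrow> bool" where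
  "positive k P c \<longleftrightarrow> (case loc k P c True of (i, j) \<Rightarrow> ichange (P i ! j) = -1)"

definition comp_weight :: "nat \<Rightarrow> 'c diagram \<Rightarrow> nat \<Rightarrow> int" where
  "comp_weight k P i = (\<Sum>q\<leftarrow>P i. if is_self k P (pcross q) then 0 else ichange q)"

text \<open>Affine bilabel of arc j of component i, starting bilabel (a1 i, a2 i)
  (the formal variables are modelled by arbitrary integers). Arc (length (P i))
  carries the discrepancy (weight in the second entry).\<close>
definition label :: "nat \<Rightarrow> 'c diagram \<Rightarrow> (nat \<Rightarrow> int) \<Rightarrow> (nat \<Rightarrow> int) \<Rightarrow> nat \<Rightarrow> nat \<Rightarrow> int \<times> int" where
  "label k P a1 a2 i j =
     (a1 i + (\<Sum>q\<leftarrow>take j (P i). if is_self k P (pcross q) then ichange q else 0),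
      a2 i + (\<Sum>q\<leftarrow>take j (P i). if is_self k P (pcross q) then 0 else ichange q))"

definition babs :: "int \<times> int \<Rightarrow> int" where "babs xy = fst xy + snd xy"

text \<open>Arcs at crossing c drawn with both strands upward: the (-1)-strand runs
  bottom-left to top-right, the (+1)-strand bottom-right to top-left.\<close>
definition arc_BL where "arc_BL k P a1 a2 c = (case strand_loc k P c (-1) of (i, j) \<Rightarrow> label k P a1 a2 i j)"
definition arc_TR where "arc_TR k P a1 a2 c = (case strand_loc k P c (-1) of (i, j) \<Rightarrow> label k P a1 a2 i (Suc j))"
definition arc_BR where "arc_BR k P a1 a2 c = (case strand_loc k P c 1 of (i, j) \<Rightarrow> label k P a1 a2 i j)"
definition arc_TL where "arc_TL k P a1 a2 c = (case strand_loc k P c 1 of (i, j) \<Rightarrow> label k P a1 a2 i (Suc j))"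

definition cweight :: "nat \<Rightarrow> 'c diagram \<Rightarrow> (nat \<Rightarrow> int) \<Rightarrow> (nat \<Rightarrow> int) \<Rightarrow> 'c \<Rightarrow> int" where
  "cweight k P a1 a2 c =
     (if positive k P c then babs (arc_BL k P a1 a2 c) - babs (arc_TL k P a1 a2 c)
      else babs (arc_BR k P a1 a2 c) - babs (arc_TR k P a1 a2 c))"

end

theory Submission
  imports Defs
begin

definition pos :: "nat \<Rightarrow> 'c diagram \<Rightarrow> ('c passage \<Rightarrow> bool) \<Rightarrow> nat \<times> nat \<Rightarrow> bool" where
  "pos k P Q ij \<longleftrightarrow> fst ij < k \<and> snd ij < length (P (fst ij)) \<and> Q (P (fst ij) ! snd ij)"

definition sg :: "nat \<Rightarrow> nat \<Rightarrow> nat \<times> nat \<Rightarrow> nat \<times> nat" where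
  "sg i L ij = (fst ij, if fst ij = i then (snd ij + L - 1) mod L else snd ij)"

lemma loc_pos: "loc k P c b = (THE ij. pos k P (\<lambda>q. pcross q = c \<and> pover q = b) ij)"
  by (simp add: loc_def pos_def)

lemma strand_loc_pos: "strand_loc k P c e = (THE ij. pos k P (\<lambda>q. pcross q = c \<and> ichange q = e) ij)"
  by (simp add: strand_loc_def pos_def)

lemma mod_pred: assumes "j < (L::nat)" shows "Suc ((j + L - 1) mod L) mod L = j"
proof (cases j)
  case 0 then show ?thesis using assms by simp
next
  case (Suc m)
  then have "j + L - 1 = m + L" by simp
  then have "(j + L - 1) mod L = m" using Suc assms by simp
  then show ?thesis using Suc assms by simp
qed

lemma mod_succ: assumes "j < (L::nat)" shows "(Suc j mod L + L - 1) mod L = j"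
proof (cases "Suc j < L")
  case True then show ?thesis by simp
next
  case False then have "Suc j = L" using assms by simp
  then show ?thesis by simp
qed

lemma rot_nth_sg:
  assumes "P i \<noteq> []" "j < length (P a)"
  shows "(P(i := rotate1 (P i))) a ! snd (sg i (length (P i)) (a,j)) = P a ! j"
proof (cases "a = i")
  case True
  let ?L = "length (P i)"
  have "(j + ?L - 1) mod ?L < ?L" using assms by simp
  then have "rotate1 (P i) ! ((j + ?L - 1) mod ?L) = P i ! (Suc ((j + ?L - 1) mod ?L) mod ?L)"
    by (simp add: nth_rotate1)
  also have "\<dots> = P i ! j" using mod_pred[of j ?L] assms True by simp
  finally show ?thesis using True by (simp add: sg_def)
qed (simp add: sg_def)

lemma pos_sg:
  assumes "P i \<noteq> []" "pos k P Q (a,j)"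
  shows "pos k (P(i := rotate1 (P i))) Q (sg i (length (P i)) (a,j))"
proof -
  have "snd (sg i (length (P i)) (a,j)) < length ((P(i := rotate1 (P i))) a)"
    using assms by (auto simp: sg_def pos_def)
  then show ?thesis using assms rot_nth_sg[of P i j a] by (auto simp: pos_def sg_def)
qed

lemma pos_sg_inv:
  assumes "P i \<noteq> []" "pos k (P(i := rotate1 (P i))) Q (a,j)"
  shows "\<exists>j'. pos k P Q (a,j') \<and> sg i (length (P i)) (a,j') = (a,j)"
proof (cases "a = i")
  case True
  let ?L = "length (P i)"
  have j: "j < ?L" using assms True by (simp add: pos_def)
  have L0: "0 < ?L" using assms(1) by simp
  have "rotate1 (P i) ! j = P i ! (Suc j mod ?L)" using j by (simp add: nth_rotate1)
  moreover have "Suc j mod ?L < ?L" using L0 by simp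
  ultimately have "pos k P Q (a, Suc j mod ?L)" using assms True by (simp add: pos_def)
  moreover have "sg i ?L (a, Suc j mod ?L) = (a,j)" using mod_succ[OF j] True by (simp add: sg_def)
  ultimately show ?thesis by blast
next
  case False
  then show ?thesis using assms by (auto simp: pos_def sg_def)
qed

lemma the_sg:
  assumes "P i \<noteq> []" "\<exists>!ij. pos k P Q ij"
  shows "(THE ij. pos k (P(i := rotate1 (P i))) Q ij) = sg i (length (P i)) (THE ij. pos k P Q ij)"
proof -
  obtain ij0 where aj0: "pos k P Q ij0" and u0: "\<And>ij. pos k P Q ij \<Longrightarrow> ij = ij0"
    using assms(2) by (elim ex1E) blast
  obtain a j where ij0: "ij0 = (a,j)" by (cases ij0)
  have aj: "pos k P Q (a,j)" using aj0 ij0 by simp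
  have u: "\<And>ij. pos k P Q ij \<Longrightarrow> ij = (a,j)" using u0 ij0 by simp
  have t: "(THE ij. pos k P Q ij) = (a,j)" using aj u by blast
  show ?thesis unfolding t
  proof (rule the_equality)
    show "pos k (P(i := rotate1 (P i))) Q (sg i (length (P i)) (a, j))" using pos_sg[OF assms(1) aj] .
  next
    fix ij assume "pos k (P(i := rotate1 (P i))) Q ij"
    then obtain a' j' where "ij = (a',j')" "pos k (P(i := rotate1 (P i))) Q (a',j')" by (cases ij) auto
    then obtain j'' where "pos k P Q (a',j'')" "sg i (length (P i)) (a',j'') = (a',j')"
      using pos_sg_inv[of P i k Q a' j'] assms(1) by blast
    then show "ij = sg i (length (P i)) (a, j)" using u \<open>ij = (a',j')\<close> by metis
  qed
qed

lemma wf_at: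
  assumes "wf_diagram k P" "a < k" "j < length (P a)" "P a ! j = (c,b,e)"
  shows "(e = 1 \<or> e = -1) \<and> (\<exists>!ij. pos k P (\<lambda>q. pcross q = c \<and> pover q = b) ij)
    \<and> (\<exists>a'<k. \<exists>j'<length (P a'). P a' ! j' = (c, \<not> b, - e))"
proof -
  have "case P a ! j of (c, b, e) \<Rightarrow>
       (e = 1 \<or> e = -1) \<and>
       (\<exists>!ij. fst ij < k \<and> snd ij < length (P (fst ij)) \<and>
              pcross (P (fst ij) ! snd ij) = c \<and> pover (P (fst ij) ! snd ij) = b) \<and>
       (\<exists>i'<k. \<exists>j'<length (P i'). P i' ! j' = (c, \<not> b, - e))"
    using assms(1)[unfolded wf_diagram_def, rule_format, OF assms(2,3)] .
  then show ?thesis using assms(4) by (simp add: pos_def)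
qed

lemma loc_eq:
  assumes "wf_diagram k P" "a < k" "j < length (P a)" "P a ! j = (c,b,e)"
  shows "loc k P c b = (a,j)"
proof -
  have u: "\<exists>!ij. pos k P (\<lambda>q. pcross q = c \<and> pover q = b) ij" using wf_at[OF assms] by blast
  have "pos k P (\<lambda>q. pcross q = c \<and> pover q = b) (a,j)" using assms by (simp add: pos_def pcross_def pover_def)
  then show ?thesis unfolding loc_pos by (rule the1_equality[OF u])
qed

lemma partner:
  assumes "wf_diagram k P" "a < k" "j < length (P a)" "P a ! j = (c,b,e)"
  shows "\<exists>a' j'. a' < k \<and> j' < length (P a') \<and> P a' ! j' = (c, \<not> b, -e) \<and> loc k P c (\<not> b) = (a',j')
     \<and> (\<exists>!ij. pos k P (\<lambda>q. pcross q = c \<and> pover q = (\<not> b)) ij)"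
proof -
  obtain a' j' where a': "a' < k" "j' < length (P a')" "P a' ! j' = (c, \<not> b, -e)"
    using wf_at[OF assms] by blast
  show ?thesis using a' loc_eq[OF assms(1) a'] wf_at[OF assms(1) a'] by blast
qed

lemma strand_eq:
  assumes "wf_diagram k P" "a < k" "j < length (P a)" "P a ! j = (c,b,e)"
  shows "(\<exists>!ij. pos k P (\<lambda>q. pcross q = c \<and> ichange q = e) ij) \<and> strand_loc k P c e = (a,j)"
proof -
  have e: "e = 1 \<or> e = -1" and u: "\<exists>!ij. pos k P (\<lambda>q. pcross q = c \<and> pover q = b) ij"
    using wf_at[OF assms] by auto
  obtain a' j' where a': "a' < k" "j' < length (P a')" "P a' ! j' = (c, \<not> b, -e)"
    and u': "\<exists>!ij. pos k P (\<lambda>q. pcross q = c \<and> pover q = (\<not> b)) ij"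
    using partner[OF assms] by blast
  have p0: "pos k P (\<lambda>q. pcross q = c \<and> ichange q = e) (a,j)"
    using assms by (simp add: pos_def pcross_def ichange_def)
  have uniq: "ij = (a,j)" if h: "pos k P (\<lambda>q. pcross q = c \<and> ichange q = e) ij" for ij
  proof -
    obtain a2 j2 where ij: "ij = (a2,j2)" by (cases ij)
    obtain b2 where b2: "P a2 ! j2 = (c, b2, e)" using h ij
      by (cases "P a2 ! j2") (auto simp: pos_def pcross_def ichange_def)
    show ?thesis
    proof (cases "b2 = b")
      case True
      have "pos k P (\<lambda>q. pcross q = c \<and> pover q = b) (a2,j2)"
        using h ij b2 True by (simp add: pos_def pcross_def pover_def)
      moreover have "pos k P (\<lambda>q. pcross q = c \<and> pover q = b) (a,j)"
        using assms by (simp add: pos_def pcross_def pover_def)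
      ultimately show ?thesis using u ij by blast
    next
      case False
      have "pos k P (\<lambda>q. pcross q = c \<and> pover q = (\<not> b)) (a2,j2)"
        using h ij b2 False by (simp add: pos_def pcross_def pover_def)
      moreover have "pos k P (\<lambda>q. pcross q = c \<and> pover q = (\<not> b)) (a',j')"
        using a' by (simp add: pos_def pcross_def pover_def)
      ultimately have "(a2,j2) = (a',j')" using u' by blast
      then have "e = -e" using a' b2 by simp
      then show ?thesis using e by simp
    qed
  qed
  have ex: "\<exists>!ij. pos k P (\<lambda>q. pcross q = c \<and> ichange q = e) ij" using p0 uniq by blast
  show ?thesis using ex p0 uniq unfolding strand_loc_pos by blast
qed

lemma fst_sg[simp]: "fst (sg i L ij) = fst ij" by (simp add: sg_def)

lemma loc_sh:
  assumes "wf_diagram k P" "a < k" "j < length (P a)" "P a ! j = (c,b,e)" "P i \<noteq> []"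
  shows "loc k (P(i := rotate1 (P i))) c b = sg i (length (P i)) (loc k P c b)"
    and "loc k (P(i := rotate1 (P i))) c (\<not> b) = sg i (length (P i)) (loc k P c (\<not> b))"
proof -
  have u: "\<exists>!ij. pos k P (\<lambda>q. pcross q = c \<and> pover q = b) ij" using wf_at[OF assms(1-4)] by blast
  have u': "\<exists>!ij. pos k P (\<lambda>q. pcross q = c \<and> pover q = (\<not> b)) ij" using partner[OF assms(1-4)] by blast
  show "loc k (P(i := rotate1 (P i))) c b = sg i (length (P i)) (loc k P c b)"
    unfolding loc_pos using the_sg[OF assms(5) u] .
  show "loc k (P(i := rotate1 (P i))) c (\<not> b) = sg i (length (P i)) (loc k P c (\<not> b))"
    unfolding loc_pos using the_sg[OF assms(5) u'] .
qed

lemma is_self_sh: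
  assumes "wf_diagram k P" "a < k" "q \<in> set (P a)" "P i \<noteq> []"
  shows "is_self k (P(i := rotate1 (P i))) (pcross q) = is_self k P (pcross q)"
proof -
  obtain j where j: "j < length (P a)" "P a ! j = q" using assms(3) by (auto simp: in_set_conv_nth)
  obtain c b e where q: "q = (c,b,e)" by (cases q) auto
  have l1: "loc k (P(i := rotate1 (P i))) c b = sg i (length (P i)) (loc k P c b)"
   and l2: "loc k (P(i := rotate1 (P i))) c (\<not> b) = sg i (length (P i)) (loc k P c (\<not> b))"
    using loc_sh[OF assms(1,2) j(1) _ assms(4)] j q by auto
  show ?thesis using l1 l2 q by (cases b) (auto simp: is_self_def pcross_def)
qed

lemma partner_self:
  assumes "wf_diagram k P" "i < k" "j < length (P i)" "P i ! j = (c,b,e)" "is_self k P c"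
  shows "\<exists>j'. j' < length (P i) \<and> P i ! j' = (c, \<not> b, -e) \<and> loc k P c (\<not> b) = (i,j') \<and> loc k P c b = (i,j)"
proof -
  obtain a' j' where a': "a' < k" "j' < length (P a')" "P a' ! j' = (c, \<not> b, -e)" "loc k P c (\<not> b) = (a',j')"
    using partner[OF assms(1-4)] by blast
  have l: "loc k P c b = (i,j)" using loc_eq[OF assms(1-4)] .
  have "a' = i" using assms(5) a'(4) l by (cases b) (auto simp: is_self_def)
  then show ?thesis using a' l by blast
qed

lemma self_sum_zero:
  assumes "wf_diagram k P" "i < k"
  shows "(\<Sum>q\<leftarrow>P i. if is_self k P (pcross q) then ichange q else 0) = 0"
proof -
  let ?L = "length (P i)"
  define A where "A = {j. j < ?L \<and> is_self k P (pcross (P i ! j))}"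
  define g where "g j = ichange (P i ! j)" for j
  define f where "f q = (if is_self k P (pcross q) then ichange q else 0)" for q
  have "(\<Sum>q\<leftarrow>P i. f q) = (\<Sum>j = 0..<?L. f (P i ! j))"
    by (simp add: sum_list_sum_nth)
  also have "\<dots> = (\<Sum>j\<in>{0..<?L}. if is_self k P (pcross (P i ! j)) then g j else 0)"
    unfolding f_def g_def by simp
  also have "\<dots> = sum g A"
    by (simp add: sum.inter_filter[symmetric] A_def atLeast0LessThan Collect_conj_eq lessThan_def)
  finally have s: "(\<Sum>q\<leftarrow>P i. f q) = sum g A" .
  define pp where "pp j = snd (loc k P (pcross (P i ! j)) (\<not> pover (P i ! j)))" for j
  have key: "pp j \<in> A \<and> pp (pp j) = j \<and> g (pp j) = - g j" if "j \<in> A" for j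
  proof -
    obtain c b e where q: "P i ! j = (c,b,e)" by (cases "P i ! j") auto
    have j: "j < ?L" "is_self k P c" using that q by (auto simp: A_def pcross_def)
    obtain j' where j': "j' < ?L" "P i ! j' = (c, \<not> b, -e)" "loc k P c (\<not> b) = (i,j')" "loc k P c b = (i,j)"
      using partner_self[OF assms j(1) q j(2)] by blast
    have ppj: "pp j = j'" using q j' by (simp add: pp_def pcross_def pover_def)
    have ppj': "pp j' = j" using j' by (simp add: pp_def pcross_def pover_def)
    show ?thesis using ppj ppj' j j' q by (simp add: A_def pcross_def g_def ichange_def)
  qed
  have "sum (\<lambda>j. - g j) A = sum g A"
    by (rule sum.reindex_bij_witness[where i=pp and j=pp]) (use key in auto)
  then have "sum g A = 0" by (simp add: sum_negf)
  then show ?thesis using s by (simp add: f_def)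
qed

theorem lemma2:
  fixes k :: nat and P :: "'c diagram" and a1 a2 :: "nat \<Rightarrow> int"
    and i :: nat and c :: 'c and b :: bool and \<iota> n :: int
  assumes "wf_diagram k P"
    and "i < k"
    and "P i \<noteq> []"
    and "P i ! 0 = (c, b, \<iota>)"
    and "is_self k P c"
    and "n = comp_weight k P i"
  shows "cweight k (P(i := rotate1 (P i))) a1 a2 c
           = cweight k P a1 a2 c + (if b then n else - n)
    \<and> (\<forall>j. 1 \<le> j \<and> j \<le> length (P i) \<longrightarrow>
           label k (P(i := rotate1 (P i))) a1 a2 i (j - 1)
             = (fst (label k P a1 a2 i j) - \<iota>, snd (label k P a1 a2 i j)))"
proof -
  let ?P' = "P(i := rotate1 (P i))"
  let ?L = "length (P i)"
  obtain x xs where Pi: "P i = x # xs" using assms(3) by (cases "P i") auto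
  have x: "x = (c,b,\<iota>)" using Pi assms(4) by simp
  have setq: "\<And>q. q \<in> set (P i) \<Longrightarrow> is_self k ?P' (pcross q) = is_self k P (pcross q)"
    using is_self_sh[OF assms(1,2) _ assms(3)] by blast
  define fs :: "'c diagram \<Rightarrow> 'c passage \<Rightarrow> int" where "fs Q q = (if is_self k Q (pcross q) then ichange q else 0)" for Q q
  define fe :: "'c diagram \<Rightarrow> 'c passage \<Rightarrow> int" where "fe Q q = (if is_self k Q (pcross q) then 0 else ichange q)" for Q q
  have fx: "fs P x = \<iota>" "fe P x = 0" using assms(5) x by (auto simp: fs_def fe_def pcross_def ichange_def)
  have rot: "rotate1 (P i) = xs @ [x]" using Pi by simp
  have lab': "label k ?P' a1 a2 i j = (a1 i + sum_list (map (fs P) (take j (rotate1 (P i)))),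
       a2 i + sum_list (map (fe P) (take j (rotate1 (P i)))))" for j
  proof -
    have sub: "set (take j (rotate1 (P i))) \<subseteq> set (P i)" by (auto dest: in_set_takeD)
    have m1: "map (fs ?P') (take j (rotate1 (P i))) = map (fs P) (take j (rotate1 (P i)))"
      using sub setq by (auto simp: fs_def)
    have m2: "map (fe ?P') (take j (rotate1 (P i))) = map (fe P) (take j (rotate1 (P i)))"
      using sub setq by (auto simp: fe_def)
    have "label k ?P' a1 a2 i j = (a1 i + sum_list (map (fs ?P') (take j (rotate1 (P i)))),
       a2 i + sum_list (map (fe ?P') (take j (rotate1 (P i)))))"
      unfolding label_def fs_def fe_def by simp
    then show ?thesis unfolding m1 m2 .
  qed
  have lab: "label k P a1 a2 i j = (a1 i + sum_list (map (fs P) (take j (x#xs))),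
       a2 i + sum_list (map (fe P) (take j (x#xs))))" for j
    unfolding label_def Pi fs_def fe_def by simp
  have part2: "\<forall>j. 1 \<le> j \<and> j \<le> length (P i) \<longrightarrow>
           label k ?P' a1 a2 i (j - 1)
             = (fst (label k P a1 a2 i j) - \<iota>, snd (label k P a1 a2 i j))"
  proof (intro allI impI)
    fix j assume j: "1 \<le> j \<and> j \<le> length (P i)"
    then have t1: "take (j-1) (xs@[x]) = take (j-1) xs" using Pi by simp
    have t2: "take j (x#xs) = x # take (j-1) xs" using j by (cases j) auto
    show "label k ?P' a1 a2 i (j - 1) = (fst (label k P a1 a2 i j) - \<iota>, snd (label k P a1 a2 i j))"
    proof -
      have l2: "label k ?P' a1 a2 i (j-1) = (a1 i + sum_list (map (fs P) (take (j-1) (xs@[x]))),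
       a2 i + sum_list (map (fe P) (take (j-1) (xs@[x]))))"
        using lab'[of "j-1"] by (simp only: rot)
      show ?thesis unfolding l2 lab t1 t2 using fx by simp
    qed
  qed
  have S0: "sum_list (map (fs P) (P i)) = 0"
    using self_sum_zero[OF assms(1,2)] by (simp add: fs_def[abs_def])
  have nn: "n = sum_list (map (fe P) (P i))" using assms(6) by (simp add: comp_weight_def fe_def[abs_def])
  have lL': "label k ?P' a1 a2 i ?L = (a1 i, a2 i + n)"
    using S0 nn Pi unfolding lab' by (simp add: add.commute)
  have lL: "label k P a1 a2 i ?L = (a1 i, a2 i + n)"
    using S0 nn Pi unfolding lab by simp
  have l0: "label k P a1 a2 i 0 = (a1 i, a2 i)" unfolding lab by simp
  have l1: "label k P a1 a2 i 1 = (a1 i + \<iota>, a2 i)" unfolding lab using fx by simp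
  have i0: "0 < ?L" using assms(3) by simp
  obtain p where p: "p < ?L" "P i ! p = (c, \<not> b, -\<iota>)" "loc k P c (\<not> b) = (i,p)" "loc k P c b = (i,0)"
    using partner_self[OF assms(1,2) i0 assms(4,5)] by blast
  have p0: "p \<noteq> 0"
  proof
    assume "p = 0"
    then have "(c, \<not> b, -\<iota>) = (c, b, \<iota>)" using p(2) assms(4) by simp
    then show False by simp
  qed
  have s1: "(\<exists>!ij. pos k P (\<lambda>q. pcross q = c \<and> ichange q = \<iota>) ij) \<and> strand_loc k P c \<iota> = (i,0)"
    using strand_eq[OF assms(1,2) i0 assms(4)] .
  have s2: "(\<exists>!ij. pos k P (\<lambda>q. pcross q = c \<and> ichange q = -\<iota>) ij) \<and> strand_loc k P c (-\<iota>) = (i,p)"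
    using strand_eq[OF assms(1,2) p(1,2)] .
  have sg0: "sg i ?L (i,0) = (i, ?L - 1)" using i0 by (simp add: sg_def)
  have sgp: "sg i ?L (i,p) = (i, p - 1)"
  proof -
    have "p + ?L - 1 = (p - 1) + ?L" using p0 by simp
    then have "(p + ?L - 1) mod ?L = (p - 1) mod ?L" by simp
    also have "\<dots> = p - 1" using p(1) by simp
    finally have h: "(p + ?L - 1) mod ?L = p - 1" .
    show ?thesis unfolding sg_def using h by simp
  qed
  have e1: "strand_loc k ?P' c \<iota> = sg i ?L (strand_loc k P c \<iota>)"
    unfolding strand_loc_pos by (rule the_sg[OF assms(3) conjunct1[OF s1]])
  have e2: "strand_loc k ?P' c (-\<iota>) = sg i ?L (strand_loc k P c (-\<iota>))"
    unfolding strand_loc_pos by (rule the_sg[OF assms(3) conjunct1[OF s2]])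
  have s1': "strand_loc k ?P' c \<iota> = (i, ?L - 1)"
    unfolding e1 conjunct2[OF s1] sg0 by (rule refl)
  have s2': "strand_loc k ?P' c (-\<iota>) = (i, p - 1)"
    unfolding e2 conjunct2[OF s2] sgp by (rule refl)
  have ls: "loc k ?P' c b = sg i ?L (loc k P c b)" "loc k ?P' c (\<not> b) = sg i ?L (loc k P c (\<not> b))"
    using loc_sh[OF assms(1,2) i0 assms(4,3)] by auto
  have r0: "?P' i ! (?L - 1) = P i ! 0" using rot_nth_sg[of P i 0 i] assms(3) sg0 by simp
  have rp: "?P' i ! (p - 1) = P i ! p" using rot_nth_sg[of P i p i] assms(3) p(1) sgp by simp
  have lt: "loc k P c True = (if b then (i,0) else (i,p))" using p(3,4) by (cases b) simp_all
  have lt': "loc k ?P' c True = (if b then (i,?L - 1) else (i,p - 1))"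
    using ls lt p(3,4) sg0 sgp by (cases b) simp_all
  have posP: "positive k P c \<longleftrightarrow> (if b then \<iota> = -1 else -\<iota> = -1)"
  proof (cases b)
    case True then show ?thesis unfolding positive_def lt using assms(4) by (simp add: ichange_def)
  next
    case False then show ?thesis unfolding positive_def lt using p(2) by (simp add: ichange_def)
  qed
  have posP': "positive k ?P' c \<longleftrightarrow> (if b then \<iota> = -1 else -\<iota> = -1)"
  proof (cases b)
    case True then show ?thesis unfolding positive_def lt' using r0 assms(4) by (simp add: ichange_def)
  next
    case False then show ?thesis unfolding positive_def lt' using rp p(2) by (simp add: ichange_def)
  qed
  have lLm: "label k ?P' a1 a2 i (?L - 1) = (a1 i - \<iota>, a2 i + n)"
  proof -
    have "1 \<le> ?L \<and> ?L \<le> ?L" using Pi by simp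
    then have "label k ?P' a1 a2 i (?L - 1) = (fst (label k P a1 a2 i ?L) - \<iota>, snd (label k P a1 a2 i ?L))"
      using part2 by blast
    then show ?thesis unfolding lL by simp
  qed
  have lpm: "label k ?P' a1 a2 i (p - 1) = (fst (label k P a1 a2 i p) - \<iota>, snd (label k P a1 a2 i p))"
    using part2 p0 p(1) by simp
  have lpp: "label k ?P' a1 a2 i p = (fst (label k P a1 a2 i (Suc p)) - \<iota>, snd (label k P a1 a2 i (Suc p)))"
    using part2[rule_format, of "Suc p"] p(1) by simp
  have SL: "Suc (?L - 1) = ?L" using i0 by simp
  have Sp: "Suc (p - 1) = p" using p0 by simp
  have iota: "\<iota> = 1 \<or> \<iota> = -1" using wf_at[OF assms(1,2) i0 assms(4)] by blast
  have part1: "cweight k ?P' a1 a2 c = cweight k P a1 a2 c + (if b then n else - n)"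
  proof (cases "\<iota> = 1")
    case True
    have a: "strand_loc k P c 1 = (i,0)" "strand_loc k P c (-1) = (i,p)"
      "strand_loc k ?P' c 1 = (i,?L - 1)" "strand_loc k ?P' c (-1) = (i,p - 1)"
      using s1 s2 s1' s2' True by auto
    have A: "arc_BL k P a1 a2 c = label k P a1 a2 i p" "arc_TL k P a1 a2 c = label k P a1 a2 i 1"
      "arc_BR k P a1 a2 c = label k P a1 a2 i 0" "arc_TR k P a1 a2 c = label k P a1 a2 i (Suc p)"
      unfolding arc_BL_def arc_TL_def arc_BR_def arc_TR_def a by simp_all
    have A': "arc_BL k ?P' a1 a2 c = label k ?P' a1 a2 i (p - 1)" "arc_TL k ?P' a1 a2 c = label k ?P' a1 a2 i ?L"
      "arc_BR k ?P' a1 a2 c = label k ?P' a1 a2 i (?L - 1)" "arc_TR k ?P' a1 a2 c = label k ?P' a1 a2 i p"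
      unfolding arc_BL_def arc_TL_def arc_BR_def arc_TR_def a using SL Sp by simp_all
    show ?thesis unfolding cweight_def posP posP' A A' lLm lpm lpp lL' l0 l1
      using True by (cases b) (simp_all add: babs_def)
  next
    case False
    then have F: "\<iota> = -1" using iota by simp
    have a: "strand_loc k P c (-1) = (i,0)" "strand_loc k P c 1 = (i,p)"
      "strand_loc k ?P' c (-1) = (i,?L - 1)" "strand_loc k ?P' c 1 = (i,p - 1)"
      using s1 s2 s1' s2' F by auto
    have A: "arc_BL k P a1 a2 c = label k P a1 a2 i 0" "arc_TL k P a1 a2 c = label k P a1 a2 i (Suc p)"
      "arc_BR k P a1 a2 c = label k P a1 a2 i p" "arc_TR k P a1 a2 c = label k P a1 a2 i 1"
      unfolding arc_BL_def arc_TL_def arc_BR_def arc_TR_def a by simp_all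
    have A': "arc_BL k ?P' a1 a2 c = label k ?P' a1 a2 i (?L - 1)" "arc_TL k ?P' a1 a2 c = label k ?P' a1 a2 i p"
      "arc_BR k ?P' a1 a2 c = label k ?P' a1 a2 i (p - 1)" "arc_TR k ?P' a1 a2 c = label k ?P' a1 a2 i ?L"
      unfolding arc_BL_def arc_TL_def arc_BR_def arc_TR_def a using SL Sp by simp_all
    show ?thesis unfolding cweight_def posP posP' A A' lLm lpm lpp lL' l0 l1
      using F by (cases b) (simp_all add: babs_def)
  qed
  show ?thesis using part1 part2 by blast
qed

end
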